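(* For $n\in\mathbb{N}$ let $f_n(z)=\big(\frac{z-1}{z+1}\big)^n$, $z\in\mathbb{C}_+$. Then $f_n\in\mathcal{B}$ and $\|f_n\|_{\mathcal{B}}\le3+2\log(2n)$ for each $n\in\mathbb{N}$.
   Context: $\mathbb{C}_+=\{\Re z>0\}$. $\mathcal{B}$ is the space of holomorphic $f$ on $\mathbb{C}_+$ with $\int_0^\infty\sup_{y}|f'(x+iy)|dx<\infty$, normed by $\|f\|_{\mathcal{B}}=\sup_{\mathbb{C}_+}|f|+\int_0^\infty\sup_{y\in\mathbb{R}}|f'(x+iy)|\,dx$. *)

theory Defs
  imports "HOL-Analysis.Analysis"
begin

definition cplus :: "complex set" where
  "cplus = {z. Re z > 0}"

definition sup_deriv :: "(complex \<Rightarrow> complex) \<Rightarrow> real \<Rightarrow> real" where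
  "sup_deriv f x = (SUP y::real. norm (deriv f (Complex x y)))"

definition in_B :: "(complex \<Rightarrow> complex) \<Rightarrow> bool" where
  "in_B f \<longleftrightarrow> f holomorphic_on cplus
     \<and> bounded (f ` cplus)
     \<and> (\<forall>x>0. bdd_above (range (\<lambda>y::real. norm (deriv f (Complex x y)))))
     \<and> sup_deriv f integrable_on {0<..}"

definition B_norm :: "(complex \<Rightarrow> complex) \<Rightarrow> real" where
  "B_norm f = (SUP z\<in>cplus. norm (f z)) + integral {0<..} (sup_deriv f)"

end

theory Submission imports Defs begin
lemma g_integral:
  fixes a b :: real
  assumes a: "0 < a" and ab: "a < b"
  shows "((\<lambda>x. 1 / ((x + a) * (x + b))) has_integral (ln (b / a) / (b - a))) {0<..}"
proof -
  define F where "F x = (ln (x + a) - ln (x + b)) / (b - a)" for x :: real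
  have D: "(F has_real_derivative 1 / ((x + a) * (x + b))) (at x)" if "0 < ereal x" for x
  proof -
    have x: "0 < x" using that by simp
    have "(F has_real_derivative (1 / (x + a) - 1 / (x + b)) / (b - a)) (at x)"
      unfolding F_def using x a ab by (auto intro!: derivative_eq_intros)
    moreover have "1 / (x + a) - 1 / (x + b) = (b - a) / ((x + a) * (x + b))"
      using x a ab by (simp add: field_simps)
    then have "(1 / (x + a) - 1 / (x + b)) / (b - a) = 1 / ((x + a) * (x + b))"
      using ab by simp
    ultimately show ?thesis by simp
  qed
  have lim0: "((F \<circ> real_of_ereal) \<longlongrightarrow> (ln a - ln b) / (b - a)) (at_right 0)"
    unfolding zero_ereal_def ereal_tendsto_simps F_def
    using a ab by (auto intro!: tendsto_eq_intros)
  have q: "((\<lambda>x. (b - a) / (x + b)) \<longlongrightarrow> 0) at_top"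
  proof (rule tendsto_divide_0[OF tendsto_const])
    show "filterlim (\<lambda>x. x + b) at_infinity at_top"
      using filterlim_tendsto_add_at_top[OF tendsto_const filterlim_ident, of b]
      by (simp add: add.commute filterlim_at_top_imp_at_infinity)
  qed
  have q2: "((\<lambda>x. 1 - (b - a) / (x + b)) \<longlongrightarrow> 1) at_top"
    using tendsto_diff[OF tendsto_const q, of 1] by simp
  have q3: "((\<lambda>x. ln (1 - (b - a) / (x + b)) / (b - a)) \<longlongrightarrow> 0) at_top"
    using tendsto_divide[OF tendsto_ln[OF q2] tendsto_const, of "b - a"] ab by simp
  have ev: "eventually (\<lambda>x. ln (1 - (b - a) / (x + b)) / (b - a) = F x) at_top"
    using eventually_gt_at_top[of 0]
  proof eventually_elim
    case (elim x)
    have "1 - (b - a) / (x + b) = (x + a) / (x + b)" using elim a ab by (simp add: field_simps)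
    then show ?case unfolding F_def using elim a ab by (simp add: ln_div)
  qed
  have limi: "((F \<circ> real_of_ereal) \<longlongrightarrow> 0) (at_left \<infinity>)"
    unfolding ereal_tendsto_simps
    using tendsto_cong[OF ev] q3 by simp
  have r: "set_integrable lborel (einterval 0 \<infinity>) (\<lambda>x. 1 / ((x + a) * (x + b)))"
        "(LBINT x=0..\<infinity>. 1 / ((x + a) * (x + b))) = 0 - (ln a - ln b) / (b - a)"
    by (rule interval_integral_FTC_nonneg[OF _ D _ _ lim0 limi]; use a ab in \<open>auto simp: zero_ereal_def\<close>)+
  have e: "einterval 0 \<infinity> = {0::real<..}" by (auto simp: einterval_def zero_ereal_def)
  show ?thesis
    using set_borel_integral_eq_integral[OF r(1)] r(2) a ab
    by (simp add: e interval_lebesgue_integral_0_infty ln_div has_integral_integral diff_divide_distrib)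
qed

lemma bern_aux:
  fixes r :: real and k :: nat
  assumes "0 \<le> r" "r \<le> 1"
  shows "r ^ k * (1 + k * (1 - r)) \<le> 1"
proof (cases "r = 0")
  case True then show ?thesis by (cases k) auto
next
  case False
  then have r: "0 < r" using assms by simp
  have "1 + k * (1/r - 1) \<le> (1 + (1/r - 1)) ^ k"
    by (rule Bernoulli_inequality) (use r in simp)
  then have b: "1 + k * (1/r - 1) \<le> (1/r) ^ k" by simp
  have "1 \<le> 1/r" using r assms by simp
  then have "(1 - r) * 1 \<le> (1 - r) * (1/r)" by (rule mult_left_mono) (use assms in simp)
  moreover have "(1 - r) * (1/r) = 1/r - 1" using r by (simp add: field_simps)
  ultimately have "1 - r \<le> 1/r - 1" by simp
  then have "1 + k * (1 - r) \<le> (1/r) ^ k"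
    using b by (meson add_left_mono mult_left_mono of_nat_0_le_iff order_trans)
  then have "r ^ k * (1 + k * (1 - r)) \<le> r ^ k * (1/r) ^ k"
    using r by (simp add: mult_left_mono)
  also have "\<dots> = 1" using r by (simp add: power_one_over)
  finally show ?thesis .
qed

lemma norm_pm1:
  fixes z :: complex
  shows "(norm (z + 1))^2 = (Re z + 1)^2 + (Im z)^2"
        "(norm (z - 1))^2 = (Re z - 1)^2 + (Im z)^2"
  by (simp_all add: cmod_power2)

lemma deriv_bound:
  fixes z :: complex and n :: nat
  assumes z: "0 < Re z" and n: "1 \<le> n"
  shows "norm (of_nat n * ((z - 1) / (z + 1)) ^ (n - 1) * (2 / (z + 1)^2))
         \<le> 2 * n / ((Re z)^2 + 2 * n * Re z + 1)"
proof -
  define x where "x = Re z"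
  define u where "u = norm (z - 1)"
  define v where "v = norm (z + 1)"
  define k where "k = n - 1"
  have nk: "real n = real k + 1" using n k_def by simp
  have v2: "v^2 = (x + 1)^2 + (Im z)^2" and u2: "u^2 = (x - 1)^2 + (Im z)^2"
    using norm_pm1 unfolding u_def v_def x_def by auto
  have x0: "0 < x" using z x_def by simp
  have v0: "0 < v" using v2 x0 unfolding v_def
    by (metis add_pos_pos norm_ge_zero order_le_less power_zero_numeral zero_less_one
          sum_power2_gt_zero_iff zero_less_power2 less_numeral_extra(3))
  have vx: "(x + 1)^2 \<le> v^2" using v2 by simp
  have u0: "0 \<le> u" unfolding u_def by simp
  have uv2: "v^2 - u^2 = 4 * x" using v2 u2 by (simp add: power2_eq_square algebra_simps)
  have uv: "u \<le> v" using uv2 x0 u0 v0 by (smt (verit) power_mono)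
  define r where "r = u / v"
  have r0: "0 \<le> r" and r1: "r \<le> 1" using u0 v0 uv by (auto simp: r_def)
  have ur: "u = r * v" using v0 by (simp add: r_def)
  define Q where "Q = x^2 + 2 * n * x + 1"
  have Q0: "0 < Q" using x0 unfolding Q_def by (simp add: add_pos_nonneg)
  have h4: "4 * x = v^2 * (1 - r^2)"
    using uv2 ur by (simp add: power_mult_distrib algebra_simps)
  have "2 * k * x = k * (4 * x) / 2" by simp
  also have "\<dots> = k * v^2 * (1 - r^2) / 2" by (simp only: h4 mult.assoc)
  also have "\<dots> \<le> k * v^2 * (1 - r)"
  proof -
    have "(1 - r^2) / 2 = (1 - r) * ((1 + r) / 2)" by (simp add: power2_eq_square field_simps)
    also have "\<dots> \<le> (1 - r) * 1" by (rule mult_left_mono) (use r0 r1 in auto)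
    finally have "(1 - r^2) / 2 \<le> 1 - r" by simp
    then show ?thesis by (metis mult_left_mono of_nat_0_le_iff zero_le_power2 mult_nonneg_nonneg times_divide_eq_right)
  qed
  finally have kx: "2 * k * x \<le> k * v^2 * (1 - r)" .
  have "Q = (x + 1)^2 + 2 * k * x" unfolding Q_def using nk by (simp add: power2_eq_square algebra_simps)
  also have "\<dots> \<le> v^2 * (1 + k * (1 - r))" using vx kx by (simp add: algebra_simps)
  finally have Qb: "Q \<le> v^2 * (1 + k * (1 - r))" .
  have "r ^ k * Q \<le> r ^ k * (v^2 * (1 + k * (1 - r)))"
    using Qb r0 by (simp add: mult_left_mono)
  also have "\<dots> = v^2 * (r ^ k * (1 + k * (1 - r)))" by simp
  also have "\<dots> \<le> v^2" using bern_aux[OF r0 r1, of k] by (simp add: mult_left_le)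
  finally have key: "r ^ k * Q \<le> v^2" .
  have "norm (of_nat n * ((z - 1) / (z + 1)) ^ (n - 1) * (2 / (z + 1)^2)) = n * r ^ k * 2 / v^2"
    by (simp add: norm_mult norm_divide norm_power r_def u_def v_def k_def)
  also have "\<dots> \<le> 2 * n / Q"
  proof -
    have "n * (r^k * Q) \<le> n * v^2" by (rule mult_left_mono[OF key]) simp
    then show ?thesis using Q0 v0 by (simp add: divide_simps) (simp add: algebra_simps)
  qed
  finally show ?thesis unfolding Q_def x_def .
qed

lemma sup_rats:
  fixes h :: "real \<Rightarrow> real"
  assumes c: "continuous_on UNIV h" and b: "bdd_above (range h)"
  shows "(SUP y. h y) = (SUP y\<in>\<rat>. h y)"
proof (rule antisym)
  define S where "S = (SUP y\<in>\<rat>. h y)"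
  have bq: "bdd_above (h ` \<rat>)" using b by (meson bdd_above_mono image_mono subset_UNIV)
  have "closed {y. h y \<le> S}" by (rule closed_Collect_le[OF c continuous_on_const])
  moreover have "\<rat> \<subseteq> {y. h y \<le> S}" using cSUP_upper[OF _ bq] by (auto simp: S_def)
  ultimately have "closure \<rat> \<subseteq> {y. h y \<le> S}" by (rule closure_minimal[rotated])
  then have "\<And>y. h y \<le> S" using Rats_closure_real by auto
  then show "(SUP y. h y) \<le> S" by (intro cSUP_least) auto
next
  show "(SUP y\<in>\<rat>. h y) \<le> (SUP y. h y)"
    by (rule cSUP_subset_mono) (use b Rats_0 in auto)
qed

lemma numeric:
  fixes N :: real
  assumes N: "1 \<le> N"
  shows "1 + 2 * N * (ln ((2 * N - 1 / (2 * N)) / (1 / (2 * N))) / (2 * N - 1 / (2 * N) - 1 / (2 * N)))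
         \<le> 3 + 2 * ln (2 * N)"
proof -
  define m where "m = 2 * N^2 - 1"
  have m1: "1 \<le> m" using N unfolding m_def by (smt (verit) one_le_power power2_eq_square)
  have e1: "(2 * N - 1 / (2 * N)) / (1 / (2 * N)) = 4 * N^2 - 1"
    using N by (simp add: field_simps power2_eq_square)
  have e2: "2 * N * (1 / (2 * N - 1 / (2 * N) - 1 / (2 * N))) = (m + 1) / m"
    using N m1 unfolding m_def by (simp add: field_simps power2_eq_square)
  define L where "L = ln (4 * N^2 - 1)"
  have p: "0 < 4 * N^2 - 1" using m1 unfolding m_def by simp
  have L1: "L \<le> 2 * ln (2 * N)"
  proof -
    have "L \<le> ln (4 * N^2)" unfolding L_def using p by (intro ln_mono) auto
    also have "\<dots> = ln ((2 * N)^2)" by (simp add: power_mult_distrib)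
    also have "\<dots> = 2 * ln (2 * N)" using N by (subst ln_realpow) auto
    finally show ?thesis .
  qed
  have L2: "L \<le> 2 * m" unfolding L_def m_def using ln_le_minus_one[OF p] by simp
  have L3: "L / m \<le> 2" using L2 m1 by (simp add: divide_le_eq)
  define D where "D = 2 * N - 1 / (2 * N) - 1 / (2 * N)"
  have "2 * N * (L / D) = L * (2 * N * (1 / D))" by simp
  also have "\<dots> = L * ((m + 1) / m)" using e2 by (simp only: D_def)
  also have "\<dots> = L + L / m" using m1 by (simp add: field_simps)
  finally have c: "2 * N * (L / D) = L + L / m" .
  have lnL: "ln ((2 * N - 1 / (2 * N)) / (1 / (2 * N))) = L" using e1 by (simp only: L_def)
  show ?thesis unfolding lnL D_def[symmetric] c using L1 L3 by linarith
qed

theorem lemma3p7: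
  fixes n :: nat
  assumes "n \<ge> 1"
  shows "in_B (\<lambda>z. ((z - 1) / (z + 1)) ^ n)
         \<and> B_norm (\<lambda>z. ((z - 1) / (z + 1)) ^ n) \<le> 3 + 2 * ln (2 * real n)"
proof -
  define f where "f = (\<lambda>z::complex. ((z - 1) / (z + 1)) ^ n)"
  define D where "D = (\<lambda>z::complex. of_nat n * ((z - 1) / (z + 1)) ^ (n - 1) * (2 / (z + 1)^2))"
  define a :: real where "a = 1 / (2 * n)"
  define b :: real where "b = 2 * n - 1 / (2 * n)"
  define g where "g = (\<lambda>x::real. 2 * n * (1 / ((x + a) * (x + b))))"
  have n1: "1 \<le> real n" using assms by simp
  have a0: "0 < a" using n1 by (simp add: a_def)
  have nn: "1 \<le> real n * real n" using mult_mono[OF n1 n1] by simp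
  have ab: "a < b" using n1 nn unfolding a_def b_def by (simp add: field_simps)
  have nz: "z + 1 \<noteq> 0" if "0 < Re z" for z :: complex
    using that by (auto simp: complex_eq_iff)
  have nzC: "Complex x y + 1 \<noteq> 0" if "0 < x" for x y
    using nz[of "Complex x y"] that by simp
  have op: "open cplus" unfolding cplus_def by (simp add: open_halfspace_Re_gt)
  have hasD: "(f has_field_derivative D z) (at z)" if "z \<in> cplus" for z
  proof -
    have z: "z + 1 \<noteq> 0" using that nz by (simp add: cplus_def)
    have "(f has_field_derivative of_nat n * ((z - 1) / (z + 1)) ^ (n - 1) *
            (((z + 1) - (z - 1)) / (z + 1)^2)) (at z)"
      unfolding f_def using z
      by (auto intro!: derivative_eq_intros simp: power2_eq_square)
    then show ?thesis unfolding D_def by simp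
  qed
  have derivD: "deriv f z = D z" if "z \<in> cplus" for z
    using hasD[OF that] by (rule DERIV_imp_deriv)
  have hol: "f holomorphic_on cplus"
    using hasD op holomorphic_on_open by blast
  have fb: "norm (f z) \<le> 1" if "z \<in> cplus" for z
  proof -
    have x: "0 < Re z" using that by (simp add: cplus_def)
    have "(norm (z - 1))^2 \<le> (norm (z + 1))^2" unfolding norm_pm1 using x by (simp add: power2_eq_square algebra_simps)
    then have "norm (z - 1) \<le> norm (z + 1)" by (simp add: power2_le_iff_abs_le)
    then have "norm ((z - 1) / (z + 1)) \<le> 1" using nz[OF x] by (simp add: norm_divide divide_le_eq)
    then show ?thesis unfolding f_def by (simp add: norm_power power_le_one)
  qed
  have gb: "norm (deriv f (Complex x y)) \<le> g x" if x: "0 < x" for x y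
  proof -
    have "Complex x y \<in> cplus" using x by (simp add: cplus_def)
    then have "norm (deriv f (Complex x y)) = norm (D (Complex x y))" by (simp add: derivD)
    also have "\<dots> \<le> 2 * n / (x^2 + 2 * n * x + 1)"
      using deriv_bound[of "Complex x y" n] x assms unfolding D_def by simp
    also have "\<dots> \<le> g x"
    proof -
      have apb: "a + b = 2 * n" by (simp add: a_def b_def)
      have "(x + a) * (x + b) = x^2 + (a + b) * x + a * b"
        by (simp add: power2_eq_square algebra_simps)
      then have "(x + a) * (x + b) = x^2 + 2 * n * x + a * b" by (simp only: apb)
      moreover have "a * b \<le> 1" unfolding a_def b_def using n1 by (simp add: field_simps)
      moreover have "0 < (x + a) * (x + b)" using x a0 ab by simp
      ultimately show ?thesis unfolding g_def using n1
        by (simp add: frac_le)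
    qed
    finally show ?thesis .
  qed
  have bdd: "bdd_above (range (\<lambda>y. norm (deriv f (Complex x y))))" if "0 < x" for x
    using gb[OF that] by (intro bdd_aboveI) auto
  have sdg: "sup_deriv f x \<le> g x" if "0 < x" for x
    unfolding sup_deriv_def using gb[OF that] by (intro cSUP_least) auto
  have sd0: "0 \<le> sup_deriv f x" if "0 < x" for x
    unfolding sup_deriv_def using cSUP_upper[OF _ bdd[OF that], of 0] by (smt (verit) norm_ge_zero UNIV_I)
  have gint: "(g has_integral 2 * n * (ln (b / a) / (b - a))) {0<..}"
    unfolding g_def by (intro has_integral_mult_right g_integral a0 ab)
  have contD: "continuous_on {0<..} (\<lambda>x. norm (D (Complex x y)))" for y
    unfolding D_def using nzC
    by (intro continuous_intros) (auto simp: continuous_on_Complex)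
  have contDy: "continuous_on UNIV (\<lambda>y. norm (D (Complex x y)))" if "0 < x" for x
    unfolding D_def using nzC that
    by (intro continuous_intros) (auto simp: continuous_on_Complex)
  have sdq: "sup_deriv f x = (SUP y\<in>\<rat>. norm (D (Complex x y)))" if x: "0 < x" for x
  proof -
    have e: "deriv f (Complex x y) = D (Complex x y)" for y using x by (intro derivD) (simp add: cplus_def)
    show ?thesis unfolding sup_deriv_def e
      by (rule sup_rats[OF contDy[OF x]]) (use bdd[OF x] in \<open>simp add: e\<close>)
  qed
  have meas: "sup_deriv f \<in> borel_measurable (lebesgue_on {0<..})"
  proof -
    have "(\<lambda>x. SUP y\<in>\<rat>. norm (D (Complex x y))) \<in> borel_measurable (lebesgue_on {0<..})"
    proof (rule borel_measurable_cSUP)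
      show "countable \<rat>" by (rule countable_rat)
      show "(\<lambda>x. norm (D (Complex x y))) \<in> borel_measurable (lebesgue_on {0<..})" for y
        by (rule continuous_imp_measurable_on_sets_lebesgue[OF contD]) simp
      show "bdd_above ((\<lambda>y. norm (D (Complex x y))) ` \<rat>)" if "x \<in> space (lebesgue_on {0<..})" for x
      proof -
        have x: "0 < x" using that by simp
        have e: "deriv f (Complex x y) = D (Complex x y)" for y using x by (intro derivD) (simp add: cplus_def)
        show ?thesis using bdd[OF x] unfolding e by (meson bdd_above_mono image_mono subset_UNIV)
      qed
    qed
    then show ?thesis
      by (rule measurable_cong[THEN iffD1, rotated]) (simp add: sdq)
  qed
  have gi: "g integrable_on {0<..}" using gint by blast
  have sint: "sup_deriv f integrable_on {0<..}"
    by (rule measurable_bounded_by_integrable_imp_integrable[OF meas gi]) (use sdg sd0 in auto)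
  have inB: "in_B f"
    unfolding in_B_def
  proof (intro conjI allI impI)
    show "f holomorphic_on cplus" by (rule hol)
    show "bounded (f ` cplus)" using fb by (auto simp: bounded_iff)
    show "bdd_above (range (\<lambda>y. cmod (deriv f (Complex x y))))" if "0 < x" for x using bdd[OF that] .
    show "sup_deriv f integrable_on {0<..}" by (rule sint)
  qed
  have s1: "(SUP z\<in>cplus. norm (f z)) \<le> 1"
  proof (rule cSUP_least)
    show "cplus \<noteq> {}" using cplus_def by (metis empty_iff mem_Collect_eq one_complex.simps(1) zero_less_one)
  qed (rule fb)
  have s2: "integral {0<..} (sup_deriv f) \<le> 2 * n * (ln (b / a) / (b - a))"
  proof -
    have "integral {0<..} (sup_deriv f) \<le> integral {0<..} g"
      by (rule integral_le[OF sint gi]) (use sdg in auto)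
    then show ?thesis using gint by (simp add: integral_unique)
  qed
  have num: "1 + 2 * n * (ln (b / a) / (b - a)) \<le> 3 + 2 * ln (2 * real n)"
    using numeric[OF n1] unfolding a_def b_def by simp
  have "B_norm f \<le> 3 + 2 * ln (2 * real n)"
    unfolding B_norm_def using s1 s2 num by linarith
  then show ?thesis using inB unfolding f_def by simp
qed

end
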